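(* Let $\eta\in[0,2/\pi]$. There exist a probability space $(\Lambda,\mu)$ and response functions $p_A(a|\varphi,\lambda)$, $p_B(b|\boldsymbol y,\lambda)$ such that for all $\varphi\in[0,2\pi)$, all unit vectors $\boldsymbol y\in\mathbb R^3$, all $a\in\{+1,-1\}$ and $b\in\{+1,-1,\varnothing\}$, $$\langle\Phi^+|\mathrm A_{a|\varphi}\otimes\mathrm B_{b|\boldsymbol y}|\Phi^+\rangle=\int_\Lambda p_A(a|\varphi,\lambda)\,p_B(b|\boldsymbol y,\lambda)\,d\mu(\lambda).$$ That is, the lossy correlations of a maximally entangled two-qubit state with Alice's projective measurements restricted to the $X$–$Z$ plane and Bob's arbitrary projective measurements of efficiency $\eta\le 2/\pi$ admit a local hidden variable model.
   Context: $|\Phi^+\rangle=\frac1{\sqrt2}(|00\rangle+|11\rangle)$; $Z,X$ and $\boldsymbol\sigma=(X,Y,Z)$ Pauli matrices. Alice: $A_\varphi=\cos\varphi\,Z+\sin\varphi\,X$, $\mathrm A_{a|\varphi}=\frac12(I+aA_\varphi)$. Bob with efficiency $\eta$: $\mathrm B_{b|\boldsymbol y}=\frac\eta2(I+b\,\boldsymbol y\cdot\boldsymbol\sigma)$ for $b=\pm1$ and $\mathrm B_{\varnothing|\boldsymbol y}=(1-\eta)I$. Response functions are measurable conditional probability distributions. *)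

theory Defs
  imports "HOL-Probability.Probability"
begin

text \<open>2x2 complex matrices are represented as functions nat => nat => complex,
  with indices ranging over {0,1} (0 ~ |0>, 1 ~ |1>).\<close>

type_synonym cmat2 = "nat \<Rightarrow> nat \<Rightarrow> complex"

definition idm :: cmat2 where
  "idm i j = (if i = j then 1 else 0)"

definition pauliX :: cmat2 where
  "pauliX i j = (if i = j then 0 else 1)"

definition pauliY :: cmat2 where
  "pauliY i j = (if i = 0 \<and> j = 1 then - \<i> else if i = 1 \<and> j = 0 then \<i> else 0)"

definition pauliZ :: cmat2 where
  "pauliZ i j = (if i = j then (if i = 0 then 1 else -1) else 0)"

definition alice_obs :: "real \<Rightarrow> cmat2" where
  "alice_obs \<phi> i j = complex_of_real (cos \<phi>) * pauliZ i j + complex_of_real (sin \<phi>) * pauliX i j"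

definition alice_eff :: "int \<Rightarrow> real \<Rightarrow> cmat2" where
  "alice_eff a \<phi> i j = (1/2) * (idm i j + of_int a * alice_obs \<phi> i j)"

definition sigma_dot :: "real^3 \<Rightarrow> cmat2" where
  "sigma_dot y i j = complex_of_real (y$1) * pauliX i j + complex_of_real (y$2) * pauliY i j
                    + complex_of_real (y$3) * pauliZ i j"

text \<open>Bob's outcomes: Some 1, Some (-1) (= +1,-1) and None (= no-click, the symbol varnothing).
  B_{b|y} = eta/2 (I + b y.sigma) for b = +-1 and B_{none|y} = (1-eta) I.\<close>
definition bob_eff :: "real \<Rightarrow> int option \<Rightarrow> real^3 \<Rightarrow> cmat2" where
  "bob_eff \<eta> b y i j = (case b of
      Some s \<Rightarrow> complex_of_real (\<eta>/2) * (idm i j + of_int s * sigma_dot y i j)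
    | None \<Rightarrow> complex_of_real (1 - \<eta>) * idm i j)"

definition phi_plus :: "nat \<Rightarrow> nat \<Rightarrow> complex" where
  "phi_plus i j = (if i = j then complex_of_real (1 / sqrt 2) else 0)"

text \<open><Phi+| P (x) Q |Phi+>, with (P (x) Q)_{(ij),(kl)} = P_{ik} Q_{jl}.\<close>
definition phi_plus_expect :: "cmat2 \<Rightarrow> cmat2 \<Rightarrow> complex" where
  "phi_plus_expect P Q = (\<Sum>i<2. \<Sum>j<2. \<Sum>k<2. \<Sum>l<2.
      cnj (phi_plus i j) * P i k * Q j l * phi_plus k l)"

end

theory Submission
  imports Defs
begin

definition NN :: "real measure" where "NN = uniform_measure lborel {-pi..<pi}"
lemma NN_prob: "prob_space NN"
  unfolding NN_def by (rule prob_space_uniform_measure) auto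
lemma NN_int: assumes [measurable]: "f \<in> borel_measurable borel"
  shows "integral\<^sup>L NN f = (\<integral>x. indicator {-pi..<pi} x * f x \<partial>lborel) / (2*pi)"
proof -
  have e: "1 / ennreal (2 * pi) = ennreal (1 / (2 * pi))"
    using divide_ennreal[of 1 "2*pi"] by (simp add: ennreal_1)
  have d: "NN = density lborel (\<lambda>x. ennreal (indicator {-pi..<pi} x / (2*pi)))"
    unfolding NN_def uniform_measure_def
    by (intro arg_cong2[where f=density] refl ext) (auto simp: indicator_def e)
  have "integral\<^sup>L (density lborel (\<lambda>x. ennreal (indicator {-pi..<pi} x / (2*pi)))) f = (\<integral>x. (indicator {-pi..<pi} x / (2*pi)) * f x \<partial>lborel)"
    by (subst integral_density) auto
  then have "integral\<^sup>L NN f = (\<integral>x. (indicator {-pi..<pi} x / (2*pi)) * f x \<partial>lborel)"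
    using d by simp
  also have "\<dots> = (\<integral>x. indicator {-pi..<pi} x * f x \<partial>lborel) / (2*pi)"
    by (simp add: ac_simps)
  finally show ?thesis .
qed

definition II :: "real \<Rightarrow> real \<Rightarrow> (real \<Rightarrow> real) \<Rightarrow> real" where
  "II a b f = (\<integral>x. indicator {a..<b} x * f x \<partial>lborel)"

lemma II_intg:
  fixes f :: "real \<Rightarrow> real"
  assumes [measurable]: "f \<in> borel_measurable borel" and B: "\<And>x. \<bar>f x\<bar> \<le> B"
  shows "integrable lborel (\<lambda>x. indicator {a..<b} x * f x)"
proof -
  have i: "integrable lborel (\<lambda>x. B * indicator {a..<b} x :: real)"
  proof -
    have "emeasure lborel {a..<b} < \<infinity>" by (cases "a \<le> b") auto
    then show ?thesis by (intro integrable_mult_right integrable_real_indicator) auto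
  qed
  show ?thesis
    apply (rule Bochner_Integration.integrable_bound[OF i])
    using B by (auto simp: indicator_def intro!: AE_I2 intro: order_trans[OF _ abs_ge_self])
qed

lemma II_split:
  assumes [measurable]: "f \<in> borel_measurable borel" and B: "\<And>x. \<bar>f x\<bar> \<le> B"
    and "a \<le> b" "b \<le> c"
  shows "II a c f = II a b f + II b c f"
proof -
  have "II a c f = (\<integral>x. indicator {a..<b} x * f x + indicator {b..<c} x * f x \<partial>lborel)"
    unfolding II_def using assms(3,4)
    by (intro Bochner_Integration.integral_cong refl) (auto simp: indicator_def)
  also have "\<dots> = II a b f + II b c f"
    unfolding II_def by (intro Bochner_Integration.integral_add II_intg[OF assms(1,2)])
  finally show ?thesis .
qed

lemma II_transl:
  "II a b f = (\<integral>x. indicator {a-t..<b-t} x * f (x + t) \<partial>lborel)"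
  unfolding II_def
  by (subst lborel_integral_real_affine[where c=1 and t=t])
     (auto intro!: Bochner_Integration.integral_cong simp: indicator_def algebra_simps)

lemma II_periodic:
  assumes P: "\<And>x. f (x + 2*pi) = f x"
  shows "II (a + 2*pi) (b + 2*pi) f = II a b f"
  using II_transl[of "a + 2*pi" "b+2*pi" f "2*pi"] unfolding II_def by (simp add: P)

lemma II_step:
  assumes "f \<in> borel_measurable borel" and B: "\<And>x. \<bar>f x\<bar> \<le> B"
    and P: "\<And>x. f (x + 2*pi) = f x" and "a \<le> b" "b \<le> a + 2*pi"
  shows "II b (b + 2*pi) f = II a (a + 2*pi) f"
  using II_split[of f B, OF assms(1,2), of a b "a+2*pi"] II_split[of f B, OF assms(1,2), of b "a+2*pi" "b+2*pi"]
    II_periodic[of f, OF P, of a b] assms(4,5) by simp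

lemma II_nat:
  assumes P: "\<And>x. f (x + 2*pi) = f x"
  shows "II (a + 2*pi*real n) (a + 2*pi*real n + 2*pi) f = II a (a + 2*pi) f"
proof (induction n)
  case 0 then show ?case by simp
next
  case (Suc n)
  have "II (a + 2*pi*real (Suc n)) (a + 2*pi*real (Suc n) + 2*pi) f
     = II ((a + 2*pi*real n) + 2*pi) ((a + 2*pi*real n + 2*pi) + 2*pi) f"
    by (simp add: algebra_simps)
  also have "\<dots> = II (a + 2*pi*real n) (a + 2*pi*real n + 2*pi) f" by (rule II_periodic[of f, OF P])
  finally show ?case using Suc by simp
qed

lemma II_any:
  assumes "f \<in> borel_measurable borel" and B: "\<And>x. \<bar>f x\<bar> \<le> B"
    and P: "\<And>x. f (x + 2*pi) = f x"
  shows "II a (a + 2*pi) f = II (-pi) pi f"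
proof -
  define k where "k = \<lfloor>(a + pi) / (2*pi)\<rfloor>"
  define r where "r = a - 2*pi*k"
  have k1: "real_of_int k \<le> (a + pi) / (2*pi)" and k2: "(a + pi) / (2*pi) < real_of_int k + 1"
    unfolding k_def by linarith+
  have "real_of_int k * (2*pi) \<le> a + pi" using k1 by (simp add: field_simps)
  moreover have "a + pi < (real_of_int k + 1) * (2*pi)" using k2 by (simp add: field_simps)
  ultimately have r1: "-pi \<le> r" and r2: "r \<le> -pi + 2*pi" unfolding r_def by (auto simp: algebra_simps)
  have rr: "II r (r + 2*pi) f = II (-pi) (-pi + 2*pi) f"
    using II_step[of f B, OF assms r1 r2] by simp
  have "II a (a + 2*pi) f = II r (r + 2*pi) f"
  proof (cases "k \<ge> 0")
    case True
    then obtain n where n: "k = int n" by (metis nonneg_int_cases)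
    have "a = r + 2*pi*real n" unfolding r_def n by simp
    then show ?thesis using II_nat[of f, OF P, of r n] by simp
  next
    case False
    define n where "n = nat (-k)"
    have n: "k = - int n" using False unfolding n_def by simp
    have "r = a + 2*pi*real n" unfolding r_def n by simp
    then show ?thesis using II_nat[of f, OF P, of a n] by simp
  qed
  then show ?thesis using rr by simp
qed

lemma shift:
  assumes "f \<in> borel_measurable borel" and B: "\<And>x. \<bar>f x\<bar> \<le> B"
    and P: "\<And>x. f (x + 2*pi) = f x"
  shows "(\<integral>x. indicator {-pi..<pi} x * f (x + c) \<partial>lborel) = II (-pi) pi f"
proof -
  have "II (c - pi) (c - pi + 2*pi) f = (\<integral>x. indicator {-pi..<pi} x * f (x + c) \<partial>lborel)"
    using II_transl[of "c - pi" "c - pi + 2*pi" f c] by simp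
  then show ?thesis using II_any[of f B, OF assms, of "c - pi"] by simp
qed

lemma antiper_zero:
  assumes [measurable]: "f \<in> borel_measurable borel" and B: "\<And>x. \<bar>f x\<bar> \<le> B"
    and A: "\<And>x. f (x + pi) = - f x"
  shows "II (-pi) pi f = 0"
proof -
  have P: "\<And>x. f (x + 2*pi) = f x" using A by (metis add.assoc minus_minus mult_2)
  have "II (-pi) pi f = (\<integral>x. indicator {-pi..<pi} x * f (x + pi) \<partial>lborel)"
    using shift[of f B pi, OF assms(1,2) P] by simp
  also have "\<dots> = - II (-pi) pi f" unfolding II_def A by simp
  finally show ?thesis by simp
qed

lemma odd_zero:
  assumes [measurable]: "f \<in> borel_measurable borel"
    and P: "\<And>x. f (x + 2*pi) = f x" and O: "\<And>x. f (- x) = - f x"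
  shows "II (-pi) pi f = 0"
proof -
  have fpi: "f pi = 0" using P[of "-pi"] O[of pi] by simp
  have fmpi: "f (-pi) = 0" using fpi O[of pi] by simp
  have "II (-pi) pi f = (\<integral>x. indicator {-pi..<pi} (0 + (-1) * x) * f (0 + (-1) * x) \<partial>lborel)"
    unfolding II_def by (subst lborel_integral_real_affine[where c="-1" and t=0]) auto
  also have "\<dots> = (\<integral>x. - (indicator {-pi..<pi} x * f x) \<partial>lborel)"
    apply (intro Bochner_Integration.integral_cong refl)
    apply (auto simp: indicator_def O fpi fmpi)
    by (subgoal_tac "x = -pi") (auto simp: fmpi)
  also have "\<dots> = - II (-pi) pi f" unfolding II_def by simp
  finally show ?thesis by simp
qed

lemma II_interval:
  assumes "a \<le> b"
  shows "II a b f = (LBINT x=a..b. f x)"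
  using assms by (simp add: interval_integral_Ico set_lebesgue_integral_def II_def)

lemma II_abscos: "II (-pi) pi (\<lambda>x. \<bar>cos x\<bar>) = 4"
proof -
  have m: "(\<lambda>x::real. \<bar>cos x\<bar>) \<in> borel_measurable borel"
    by (intro borel_measurable_continuous_onI continuous_intros)
  have B: "\<And>x::real. \<bar>\<bar>cos x\<bar>\<bar> \<le> 1" by simp
  have P: "\<And>x::real. \<bar>cos (x + 2*pi)\<bar> = \<bar>cos x\<bar>" by simp
  have "II (-pi) pi (\<lambda>x. \<bar>cos x\<bar>) = II (-pi/2) (-pi/2 + 2*pi) (\<lambda>x. \<bar>cos x\<bar>)"
    using II_any[OF m B P, of "-pi/2"] by simp
  also have "\<dots> = II (-pi/2) (pi/2) (\<lambda>x. \<bar>cos x\<bar>) + II (pi/2) (3*pi/2) (\<lambda>x. \<bar>cos x\<bar>)"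
    using II_split[OF m B, of "-pi/2" "pi/2" "-pi/2 + 2*pi"] by simp
  also have "II (-pi/2) (pi/2) (\<lambda>x. \<bar>cos x\<bar>) = II (-pi/2) (pi/2) cos"
    unfolding II_def
    by (intro Bochner_Integration.integral_cong refl) (auto simp: indicator_def cos_ge_zero)
  also have "\<dots> = 2"
  proof -
    have "(LBINT x=-pi/2..pi/2. cos x) = sin (pi/2) - sin (-pi/2)"
      by (rule interval_integral_FTC_finite)
         (auto intro!: continuous_intros derivative_eq_intros simp: has_real_derivative_iff_has_vector_derivative[symmetric])
    then show ?thesis by (simp add: II_interval)
  qed
  also have "II (pi/2) (3*pi/2) (\<lambda>x. \<bar>cos x\<bar>) = II (pi/2) (3*pi/2) (\<lambda>x. - cos x)"
    unfolding II_def
  proof (intro Bochner_Integration.integral_cong refl)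
    fix x :: real
    show "indicator {pi/2..<3*pi/2} x * \<bar>cos x\<bar> = indicator {pi/2..<3*pi/2} x * - cos x"
    proof (cases "pi/2 \<le> x \<and> x < 3*pi/2")
      case True
      then have "cos (x - pi) \<ge> 0" by (intro cos_ge_zero) auto
      then have "cos x \<le> 0" by (simp add: cos_diff)
      then show ?thesis using True by (simp add: indicator_def)
    qed (auto simp: indicator_def)
  qed
  also have "\<dots> = 2"
  proof -
    have "(LBINT x=pi/2..3*pi/2. - cos x) = (- sin (3*pi/2)) - (- sin (pi/2))"
      by (rule interval_integral_FTC_finite)
         (auto intro!: continuous_intros derivative_eq_intros simp: has_real_derivative_iff_has_vector_derivative[symmetric])
    moreover have "sin (3*pi/2) = -1"
      using sin_periodic_pi[of "pi/2"] by (simp add: field_simps)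
    ultimately show ?thesis by (simp add: II_interval)
  qed
  finally show ?thesis by simp
qed

lemma II_lin:
  fixes f g :: "real \<Rightarrow> real"
  assumes [measurable]: "f \<in> borel_measurable borel" "g \<in> borel_measurable borel"
    and "\<And>x. \<bar>f x\<bar> \<le> Bf" "\<And>x. \<bar>g x\<bar> \<le> Bg"
  shows "II a b (\<lambda>x. p * f x + q * g x) = p * II a b f + q * II a b g"
proof -
  have "II a b (\<lambda>x. p * f x + q * g x) = (\<integral>x. p * (indicator {a..<b} x * f x) + q * (indicator {a..<b} x * g x) \<partial>lborel)"
    unfolding II_def by (simp add: algebra_simps)
  also have "\<dots> = p * II a b f + q * II a b g"
    unfolding II_def using II_intg[of f Bf a b] II_intg[of g Bg a b] assms by simp
  finally show ?thesis .
qed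

lemma cos_shift_pi: "cos (x + pi - c) = - cos (x - c)"
  using cos_periodic_pi[of "x - c"] by (simp add: algebra_simps)

lemma E_A: "II (-pi) pi (\<lambda>x. sgn (cos (x - c))) = 0"
  by (rule antiper_zero[where B=1]) (auto simp: cos_shift_pi sgn_minus abs_sgn_eq)

lemma E_X: "II (-pi) pi (\<lambda>x. y1 * sin x + y3 * cos x) = 0"
  by (rule antiper_zero[where B="\<bar>y1\<bar> + \<bar>y3\<bar>"])
     (auto intro!: abs_triangle_ineq[THEN order_trans] add_mono simp: abs_mult mult_left_le)

lemma E_AabsX: "II (-pi) pi (\<lambda>x. sgn (cos (x - c)) * \<bar>y1 * sin x + y3 * cos x\<bar>) = 0"
proof (rule antiper_zero[where B="\<bar>y1\<bar> + \<bar>y3\<bar>"])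
  fix x :: real
  have "\<bar>y1 * sin x + y3 * cos x\<bar> \<le> \<bar>y1\<bar> + \<bar>y3\<bar>"
    by (intro abs_triangle_ineq[THEN order_trans] add_mono) (auto simp: abs_mult mult_left_le)
  moreover have "\<bar>sgn (cos (x - c))\<bar> \<le> 1" by (simp add: abs_sgn_eq)
  ultimately show "\<bar>sgn (cos (x - c)) * \<bar>y1 * sin x + y3 * cos x\<bar>\<bar> \<le> \<bar>y1\<bar> + \<bar>y3\<bar>"
    by (simp add: abs_mult abs_sgn_eq)
qed (auto simp: cos_shift_pi sgn_minus)

lemma II_cmult:
  "II a b (\<lambda>x. p * f x) = p * II a b f"
  unfolding II_def by (simp add: algebra_simps)

lemma E_absX: "II (-pi) pi (\<lambda>x. \<bar>y1 * sin x + y3 * cos x\<bar>) = 4 * sqrt (y1^2 + y3^2)"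
proof (cases "y1^2 + y3^2 = 0")
  case True
  then have "y1 = 0" "y3 = 0" by (auto simp: add_nonneg_eq_0_iff)
  then show ?thesis by (simp add: II_def)
next
  case False
  define r where "r = sqrt (y1^2 + y3^2)"
  have r0: "r > 0" unfolding r_def using False
    by (metis add_nonneg_nonneg real_sqrt_gt_0_iff zero_le_power2 order_le_less)
  have r2: "r^2 = y1^2 + y3^2" unfolding r_def by simp
  have "(y3 / r)^2 + (y1 / r)^2 = (y1^2 + y3^2) / r^2"
    by (simp add: power_divide add_divide_distrib)
  then have "(y3 / r)^2 + (y1 / r)^2 = 1" using r2 r0 False by simp
  then obtain t where t: "y3 / r = cos t" "y1 / r = sin t" using sincos_total_2pi by metis
  have y: "y3 = r * cos t" "y1 = r * sin t" using t r0 by (auto simp: field_simps)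
  have eq: "\<bar>y1 * sin x + y3 * cos x\<bar> = r * \<bar>cos (x + (- t))\<bar>" for x :: real
  proof -
    have "y1 * sin x + y3 * cos x = r * cos (x + (-t))" by (simp add: y cos_diff algebra_simps)
    then show ?thesis using r0 by (simp add: abs_mult)
  qed
  have m: "(\<lambda>x::real. \<bar>cos x\<bar>) \<in> borel_measurable borel"
    by (intro borel_measurable_continuous_onI continuous_intros)
  have "II (-pi) pi (\<lambda>x. \<bar>y1 * sin x + y3 * cos x\<bar>) = r * II (-pi) pi (\<lambda>x. \<bar>cos (x + (- t))\<bar>)"
    unfolding eq II_cmult ..
  also have "II (-pi) pi (\<lambda>x. \<bar>cos (x + (- t))\<bar>) = II (-pi) pi (\<lambda>x. \<bar>cos x\<bar>)"
    using shift[OF m, of 1 "-t"] unfolding II_def by simp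
  finally show ?thesis using II_abscos r_def by simp
qed

lemma E_AX: "II (-pi) pi (\<lambda>x. sgn (cos (x - c)) * (y1 * sin x + y3 * cos x)) = 4 * (y1 * sin c + y3 * cos c)"
proof -
  define K1 where "K1 = y1 * sin c + y3 * cos c"
  define K2 where "K2 = y1 * cos c - y3 * sin c"
  define f where "f = (\<lambda>t::real. sgn (cos t) * (y1 * sin (t + c) + y3 * cos (t + c)))"
  have fm: "f \<in> borel_measurable borel" unfolding f_def by measurable
  have fB: "\<And>x. \<bar>f x\<bar> \<le> \<bar>y1\<bar> + \<bar>y3\<bar>"
  proof -
    fix x
    have "\<bar>y1 * sin (x + c) + y3 * cos (x + c)\<bar> \<le> \<bar>y1\<bar> + \<bar>y3\<bar>"
      by (intro abs_triangle_ineq[THEN order_trans] add_mono) (auto simp: abs_mult mult_left_le)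
    moreover have "\<bar>sgn (cos x)\<bar> \<le> 1" by (simp add: abs_sgn_eq)
    ultimately show "\<bar>f x\<bar> \<le> \<bar>y1\<bar> + \<bar>y3\<bar>"
      unfolding f_def abs_mult by (metis abs_ge_zero mult_le_cancel_right1 order_trans mult.commute mult_left_le)
  qed
  have fP: "\<And>x. f (x + 2*pi) = f x"
  proof -
    fix x :: real
    have e: "x + 2*pi + c = (x + c) + 2*pi" by simp
    show "f (x + 2*pi) = f x" unfolding f_def by (simp only: e sin_periodic cos_periodic)
  qed
  have "II (-pi) pi (\<lambda>x. sgn (cos (x - c)) * (y1 * sin x + y3 * cos x))
      = (\<integral>x. indicator {-pi..<pi} x * f (x + (- c)) \<partial>lborel)"
    unfolding II_def f_def by simp
  also have "\<dots> = II (-pi) pi f" by (rule shift[OF fm fB fP])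
  also have "f = (\<lambda>t. K1 * \<bar>cos t\<bar> + K2 * (sgn (cos t) * sin t))"
  proof
    fix t :: real
    have "sgn (cos t) * cos t = \<bar>cos t\<bar>" by (simp add: sgn_real_def)
    then show "f t = K1 * \<bar>cos t\<bar> + K2 * (sgn (cos t) * sin t)"
      unfolding f_def K1_def K2_def
      by (simp add: sin_add cos_add algebra_simps)
  qed
  also have "II (-pi) pi \<dots> = K1 * II (-pi) pi (\<lambda>t. \<bar>cos t\<bar>) + K2 * II (-pi) pi (\<lambda>t. sgn (cos t) * sin t)"
    by (rule II_lin[where Bf=1 and Bg=1]) (auto simp: abs_mult abs_sgn_eq)
  also have "II (-pi) pi (\<lambda>t. sgn (cos t) * sin t) = 0"
    by (rule odd_zero) auto
  finally show ?thesis using II_abscos K1_def by simp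
qed

lemma sum2: "(\<Sum>i<(2::nat). g i) = g 0 + g 1" for g :: "nat \<Rightarrow> complex"
  by (simp add: numeral_2_eq_2)
lemma s2: "complex_of_real (sqrt 2) * complex_of_real (sqrt 2) = 2"
  by (simp flip: of_real_mult)
lemma q_some: "phi_plus_expect (alice_eff a \<phi>) (bob_eff \<eta> (Some s) y)
   = complex_of_real (\<eta>/4 * (1 + of_int a * of_int s * (cos \<phi> * y$3 + sin \<phi> * y$1)))"
  unfolding phi_plus_expect_def sum2
  by (simp add: alice_eff_def alice_obs_def bob_eff_def sigma_dot_def idm_def pauliX_def pauliY_def pauliZ_def phi_plus_def
     algebra_simps s2)
lemma q_none: "phi_plus_expect (alice_eff a \<phi>) (bob_eff \<eta> None y)
   = complex_of_real ((1 - \<eta>)/2)"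
  unfolding phi_plus_expect_def sum2
  by (simp add: alice_eff_def alice_obs_def bob_eff_def sigma_dot_def idm_def pauliX_def pauliY_def pauliZ_def phi_plus_def
     algebra_simps s2)

definition emb :: "real \<Rightarrow> real^3" where "emb t = (\<chi> i. t)"
definition MM :: "(real^3) measure" where "MM = distr NN borel emb"
definition XX :: "real^3 \<Rightarrow> real \<Rightarrow> real" where "XX y t = y$1 * sin t + y$3 * cos t"
definition rho :: "real^3 \<Rightarrow> real" where "rho y = sqrt (y$1^2 + y$3^2)"
definition pAA :: "real \<Rightarrow> int \<Rightarrow> real^3 \<Rightarrow> real" where
  "pAA \<phi> a l = (1 + real_of_int a * sgn (cos (l$1 - \<phi>))) / 2"
definition pBB :: "real \<Rightarrow> real^3 \<Rightarrow> int option \<Rightarrow> real^3 \<Rightarrow> real" where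
  "pBB \<eta> y b l = (case b of
     Some s \<Rightarrow> (pi * \<eta> / 2) * max 0 (real_of_int s * XX y (l$1)) + \<eta> * (1 - rho y) / 2
   | None \<Rightarrow> 1 - (pi * \<eta> / 2) * \<bar>XX y (l$1)\<bar> - \<eta> * (1 - rho y))"

lemma emb_meas[measurable]: "emb \<in> borel_measurable borel"
  unfolding emb_def by (intro borel_measurable_continuous_onI continuous_intros)

lemma sets_NN: "sets NN = sets borel" unfolding NN_def by simp

lemma emb_meas_NN: "emb \<in> borel_measurable NN"
  by (subst measurable_cong_sets[OF sets_NN refl]) (rule emb_meas)

lemma emb1[simp]: "emb t $ 1 = t" by (simp add: emb_def)

lemma MM_prob: "prob_space MM"
  unfolding MM_def by (intro prob_space.prob_space_distr NN_prob emb_meas_NN)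

lemma sets_MM: "sets MM = sets borel" unfolding MM_def by simp
lemma space_MM: "space MM = UNIV" unfolding MM_def by simp

lemma meas_MM: "(f :: real^3 \<Rightarrow> real) \<in> borel_measurable borel \<Longrightarrow> f \<in> borel_measurable MM"
  by (subst measurable_cong_sets[OF sets_MM refl]) assumption

lemma pAA_meas: "pAA \<phi> a \<in> borel_measurable borel"
  unfolding pAA_def by measurable

lemma pBB_meas: "pBB \<eta> y b \<in> borel_measurable borel"
  unfolding pBB_def XX_def by (cases b) (simp_all, measurable)

lemma MM_int: assumes "f \<in> borel_measurable borel"
  shows "integral\<^sup>L MM f = II (-pi) pi (\<lambda>t. f (emb t)) / (2*pi)"
proof -
  have [measurable]: "f \<in> borel_measurable borel" by fact
  have "integral\<^sup>L MM f = integral\<^sup>L NN (\<lambda>t. f (emb t))"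
    unfolding MM_def by (rule integral_distr) (auto intro: emb_meas_NN)
  also have "\<dots> = II (-pi) pi (\<lambda>t. f (emb t)) / (2*pi)"
    by (subst NN_int) (auto simp: II_def)
  finally show ?thesis .
qed

lemma rho_le: "norm (y::real^3) = 1 \<Longrightarrow> rho y \<le> 1"
proof -
  assume "norm y = 1"
  then have "y$1^2 + y$2^2 + y$3^2 = 1"
    by (simp add: norm_eq_sqrt_inner inner_vec_def sum_3 power2_eq_square)
  then have "y$1^2 + y$3^2 \<le> 1" by (smt (verit) zero_le_power2)
  then show ?thesis unfolding rho_def by simp
qed

lemma XX_le: "\<bar>XX y t\<bar> \<le> rho y"
proof -
  have "(XX y t)^2 + (y$1 * cos t - y$3 * sin t)^2 = (y$1^2 + y$3^2) * ((sin t)^2 + (cos t)^2)"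
    unfolding XX_def by algebra
  moreover have "(sin t)^2 + (cos t)^2 = 1" by simp
  ultimately have "(XX y t)^2 + (y$1 * cos t - y$3 * sin t)^2 = y$1^2 + y$3^2" by simp
  moreover have "0 \<le> (y$1 * cos t - y$3 * sin t)^2" by simp
  ultimately have "(XX y t)^2 \<le> y$1^2 + y$3^2" by linarith
  then have "sqrt ((XX y t)^2) \<le> sqrt (y$1^2 + y$3^2)" by (rule real_sqrt_le_mono)
  then show ?thesis unfolding rho_def by simp
qed

lemma rho_nonneg: "0 \<le> rho y" unfolding rho_def by simp

lemma XX_bound: "\<bar>XX y t\<bar> \<le> \<bar>y$1\<bar> + \<bar>y$3\<bar>"
  unfolding XX_def
  by (intro abs_triangle_ineq[THEN order_trans] add_mono) (auto simp: abs_mult mult_left_le)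

definition good :: "(real \<Rightarrow> real) \<Rightarrow> bool" where
  "good f \<longleftrightarrow> f \<in> borel_measurable borel \<and> (\<exists>B. \<forall>x. \<bar>f x\<bar> \<le> B)"

lemma good_add: assumes "good f" "good g" shows "good (\<lambda>x. f x + g x)"
proof -
  from assms obtain B1 B2 where [measurable]: "f \<in> borel_measurable borel" "g \<in> borel_measurable borel"
    and b: "\<forall>x. \<bar>f x\<bar> \<le> B1" "\<forall>x. \<bar>g x\<bar> \<le> B2" unfolding good_def by blast
  have "\<forall>x. \<bar>f x + g x\<bar> \<le> B1 + B2"
    using b by (auto intro: abs_triangle_ineq[THEN order_trans] add_mono)
  then show ?thesis unfolding good_def by auto
qed

lemma good_cmult: assumes "good f" shows "good (\<lambda>x. k * f x)"
proof -
  from assms obtain B where [measurable]: "f \<in> borel_measurable borel"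
    and b: "\<forall>x. \<bar>f x\<bar> \<le> B" unfolding good_def by blast
  have "\<forall>x. \<bar>k * f x\<bar> \<le> \<bar>k\<bar> * B"
    using b by (auto simp: abs_mult intro: mult_left_mono)
  then show ?thesis unfolding good_def by auto
qed

lemma II_add: "good f \<Longrightarrow> good g \<Longrightarrow> II a b (\<lambda>x. f x + g x) = II a b f + II a b g"
  unfolding good_def using II_lin[of f g _ _ a b 1 1] by auto

lemma good_const: "good (\<lambda>x. k)" unfolding good_def by auto

lemma good_A: "good (\<lambda>x. sgn (cos (x - \<phi>)))"
  unfolding good_def by (auto intro!: exI[where x=1] simp: abs_sgn_eq)

lemma good_X: "good (XX y)"
proof -
  have m: "XX y \<in> borel_measurable borel" unfolding XX_def by measurable
  show ?thesis unfolding good_def using m XX_bound[of y] by blast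
qed

lemma good_absX: "good (\<lambda>x. \<bar>XX y x\<bar>)"
proof -
  have m: "(\<lambda>x. \<bar>XX y x\<bar>) \<in> borel_measurable borel" unfolding XX_def by measurable
  show ?thesis unfolding good_def using m XX_bound[of y] by auto
qed

lemma good_mult1: assumes "good f" shows "good (\<lambda>x. sgn (cos (x - \<phi>)) * f x)"
proof -
  from assms obtain B where [measurable]: "f \<in> borel_measurable borel"
    and b: "\<forall>x. \<bar>f x\<bar> \<le> B" unfolding good_def by blast
  have "\<forall>x. \<bar>sgn (cos (x - \<phi>)) * f x\<bar> \<le> B"
  proof
    fix x
    have "\<bar>sgn (cos (x - \<phi>))\<bar> \<le> 1" by (simp add: abs_sgn_eq)
    then have "\<bar>sgn (cos (x - \<phi>))\<bar> * \<bar>f x\<bar> \<le> \<bar>f x\<bar>" by (simp add: mult_left_le_one_le)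
    then show "\<bar>sgn (cos (x - \<phi>)) * f x\<bar> \<le> B" using b by (metis abs_mult order_trans)
  qed
  moreover have "(\<lambda>x. sgn (cos (x - \<phi>)) * f x) \<in> borel_measurable borel" by measurable
  ultimately show ?thesis unfolding good_def by blast
qed

lemma II_one: "II (-pi) pi (\<lambda>x. k) = k * (2*pi)"
  unfolding II_def by simp

lemma II_comb:
  "II (-pi) pi (\<lambda>x. k1 * \<bar>XX y x\<bar> + k2 * XX y x + k3 + k4 * (sgn (cos (x - \<phi>)) * \<bar>XX y x\<bar>)
      + k5 * (sgn (cos (x - \<phi>)) * XX y x) + k6 * sgn (cos (x - \<phi>)))
   = k1 * (4 * rho y) + k3 * (2*pi) + k5 * (4 * (y$1 * sin \<phi> + y$3 * cos \<phi>))"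
proof -
  note g = good_absX[of y] good_X[of y] good_const good_A[of \<phi>]
    good_mult1[OF good_absX[of y], of \<phi>] good_mult1[OF good_X[of y], of \<phi>]
  note gc = g[THEN good_cmult]
  have e: "II (-pi) pi (\<lambda>x. k1 * \<bar>XX y x\<bar> + k2 * XX y x + k3 + k4 * (sgn (cos (x - \<phi>)) * \<bar>XX y x\<bar>)
      + k5 * (sgn (cos (x - \<phi>)) * XX y x) + k6 * sgn (cos (x - \<phi>)))
    = k1 * II (-pi) pi (\<lambda>x. \<bar>XX y x\<bar>) + k2 * II (-pi) pi (XX y) + II (-pi) pi (\<lambda>x. k3)
      + k4 * II (-pi) pi (\<lambda>x. sgn (cos (x - \<phi>)) * \<bar>XX y x\<bar>)
      + k5 * II (-pi) pi (\<lambda>x. sgn (cos (x - \<phi>)) * XX y x) + k6 * II (-pi) pi (\<lambda>x. sgn (cos (x - \<phi>)))"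
    apply (subst II_add, (intro good_add gc g)+)+
    apply (simp only: II_cmult)
    done
  have h1: "II (-pi) pi (XX y) = 0" using E_X[of "y$1" "y$3"] unfolding XX_def by simp
  have h2: "II (-pi) pi (\<lambda>x. sgn (cos (x - \<phi>)) * \<bar>XX y x\<bar>) = 0"
    using E_AabsX[of \<phi> "y$1" "y$3"] unfolding XX_def by simp
  have h3: "II (-pi) pi (\<lambda>x. \<bar>XX y x\<bar>) = 4 * rho y"
    using E_absX[of "y$1" "y$3"] unfolding XX_def rho_def by simp
  have h4: "II (-pi) pi (\<lambda>x. sgn (cos (x - \<phi>)) * XX y x) = 4 * (y$1 * sin \<phi> + y$3 * cos \<phi>)"
    using E_AX[of \<phi> "y$1" "y$3"] unfolding XX_def by simp
  show ?thesis unfolding e II_one using h1 h2 h3 h4 E_A[of \<phi>] by simp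
qed


lemma prod_some:
  assumes "s \<in> {1, -1}"
  shows "pAA \<phi> a (emb t) * pBB \<eta> y (Some s) (emb t) =
    (pi*\<eta>/2/4) * \<bar>XX y t\<bar> + (pi*\<eta>/2 * real_of_int s/4) * XX y t + \<eta> * (1 - rho y)/4
    + (real_of_int a * (pi*\<eta>/2)/4) * (sgn (cos (t - \<phi>)) * \<bar>XX y t\<bar>)
    + (real_of_int a * (pi*\<eta>/2) * real_of_int s/4) * (sgn (cos (t - \<phi>)) * XX y t)
    + (real_of_int a * (\<eta> * (1 - rho y))/4) * sgn (cos (t - \<phi>))"
proof -
  have m: "max 0 (real_of_int s * XX y t) = (\<bar>XX y t\<bar> + real_of_int s * XX y t) / 2"
    using assms by (auto simp: max_def)
  show ?thesis unfolding pAA_def pBB_def emb1 option.case m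
    by (simp add: field_simps)
qed

lemma prod_none:
  "pAA \<phi> a (emb t) * pBB \<eta> y None (emb t) =
    (- (pi*\<eta>/2)/2) * \<bar>XX y t\<bar> + 0 * XX y t + (1 - \<eta> * (1 - rho y))/2
    + (- real_of_int a * (pi*\<eta>/2)/2) * (sgn (cos (t - \<phi>)) * \<bar>XX y t\<bar>)
    + 0 * (sgn (cos (t - \<phi>)) * XX y t)
    + (real_of_int a * (1 - \<eta> * (1 - rho y))/2) * sgn (cos (t - \<phi>))"
  unfolding pAA_def pBB_def emb1 option.case
  by (simp add: field_simps)

lemma int_some:
  assumes "s \<in> {1, -1}"
  shows "integral\<^sup>L MM (\<lambda>l. pAA \<phi> a l * pBB \<eta> y (Some s) l)
    = \<eta>/4 * (1 + real_of_int a * real_of_int s * (cos \<phi> * y$3 + sin \<phi> * y$1))"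
proof -
  have "integral\<^sup>L MM (\<lambda>l. pAA \<phi> a l * pBB \<eta> y (Some s) l)
     = II (-pi) pi (\<lambda>t. pAA \<phi> a (emb t) * pBB \<eta> y (Some s) (emb t)) / (2*pi)"
    using pAA_meas[of \<phi> a] pBB_meas[of \<eta> y "Some s"] by (intro MM_int) measurable
  also have "\<dots> = ((pi*\<eta>/2/4) * (4 * rho y) + (\<eta> * (1 - rho y)/4) * (2*pi)
     + (real_of_int a * (pi*\<eta>/2) * real_of_int s/4) * (4 * (y$1 * sin \<phi> + y$3 * cos \<phi>))) / (2*pi)"
    unfolding prod_some[OF assms] II_comb ..
  also have "\<dots> = \<eta>/4 * (1 + real_of_int a * real_of_int s * (cos \<phi> * y$3 + sin \<phi> * y$1))"
    by (simp add: field_simps)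
  finally show ?thesis .
qed

lemma int_none:
  shows "integral\<^sup>L MM (\<lambda>l. pAA \<phi> a l * pBB \<eta> y None l) = (1 - \<eta>) / 2"
proof -
  have "integral\<^sup>L MM (\<lambda>l. pAA \<phi> a l * pBB \<eta> y None l)
     = II (-pi) pi (\<lambda>t. pAA \<phi> a (emb t) * pBB \<eta> y None (emb t)) / (2*pi)"
    using pAA_meas[of \<phi> a] pBB_meas[of \<eta> y None] by (intro MM_int) measurable
  also have "\<dots> = ((- (pi*\<eta>/2)/2) * (4 * rho y) + ((1 - \<eta> * (1 - rho y))/2) * (2*pi)
     + 0 * (4 * (y$1 * sin \<phi> + y$3 * cos \<phi>))) / (2*pi)"
    unfolding prod_none II_comb ..
  also have "\<dots> = (1 - \<eta>) / 2"
    by (simp add: field_simps)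
  finally show ?thesis .
qed

theorem mainTheorem14:
  fixes \<eta> :: real
  assumes "0 \<le> \<eta>" and "\<eta> \<le> 2 / pi"
  shows "\<exists>(M :: (real^3) measure) (pA :: real \<Rightarrow> int \<Rightarrow> real^3 \<Rightarrow> real)
            (pB :: real^3 \<Rightarrow> int option \<Rightarrow> real^3 \<Rightarrow> real).
     prob_space M \<and>
     (\<forall>\<phi> a. 0 \<le> \<phi> \<and> \<phi> < 2 * pi \<and> a \<in> {1, -1} \<longrightarrow>
        pA \<phi> a \<in> borel_measurable M \<and> (\<forall>l\<in>space M. 0 \<le> pA \<phi> a l \<and> pA \<phi> a l \<le> 1)) \<and>
     (\<forall>\<phi>. 0 \<le> \<phi> \<and> \<phi> < 2 * pi \<longrightarrow> (\<forall>l\<in>space M. pA \<phi> 1 l + pA \<phi> (-1) l = 1)) \<and>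
     (\<forall>y b. norm y = 1 \<and> b \<in> {Some 1, Some (-1), None} \<longrightarrow>
        pB y b \<in> borel_measurable M \<and> (\<forall>l\<in>space M. 0 \<le> pB y b l \<and> pB y b l \<le> 1)) \<and>
     (\<forall>y. norm y = 1 \<longrightarrow>
        (\<forall>l\<in>space M. pB y (Some 1) l + pB y (Some (-1)) l + pB y None l = 1)) \<and>
     (\<forall>\<phi> y a b. 0 \<le> \<phi> \<and> \<phi> < 2 * pi \<and> norm y = 1 \<and> a \<in> {1, -1} \<and>
        b \<in> {Some 1, Some (-1), None} \<longrightarrow>
        phi_plus_expect (alice_eff a \<phi>) (bob_eff \<eta> b y)
          = complex_of_real (integral\<^sup>L M (\<lambda>l. pA \<phi> a l * pB y b l)))"
proof -
  have pi3: "pi > 3" by (rule pi_gt3)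
  have c1: "pi * \<eta> / 2 \<le> 1" using assms(2) by (simp add: field_simps)
  have c0: "0 \<le> pi * \<eta> / 2" using assms(1) by simp
  have e1: "\<eta> \<le> 1"
  proof -
    have "2 / pi \<le> 1" using pi3 by simp
    then show ?thesis using assms(2) by linarith
  qed
  have P2: "\<forall>\<phi> a. 0 \<le> \<phi> \<and> \<phi> < 2 * pi \<and> a \<in> {1, -1} \<longrightarrow>
        pAA \<phi> a \<in> borel_measurable MM \<and> (\<forall>l\<in>space MM. 0 \<le> pAA \<phi> a l \<and> pAA \<phi> a l \<le> 1)"
    by (auto intro!: meas_MM pAA_meas simp: pAA_def sgn_real_def)
  have P3: "\<forall>\<phi>. 0 \<le> \<phi> \<and> \<phi> < 2 * pi \<longrightarrow> (\<forall>l\<in>space MM. pAA \<phi> 1 l + pAA \<phi> (-1) l = 1)"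
    by (simp add: pAA_def field_simps)
  have bnd: "0 \<le> pBB \<eta> y b l \<and> pBB \<eta> y b l \<le> 1"
    if y: "norm y = 1" and b: "b \<in> {Some 1, Some (-1), None}" for y b l
  proof -
    define X where "X = XX y (l$1)"
    define c where "c = pi * \<eta> / 2"
    have X: "\<bar>X\<bar> \<le> rho y" unfolding X_def by (rule XX_le)
    have r1: "rho y \<le> 1" by (rule rho_le[OF y])
    have r0: "0 \<le> rho y" by (rule rho_nonneg)
    have cX: "c * \<bar>X\<bar> \<le> rho y"
      using mult_left_le_one_le[of "\<bar>X\<bar>" c] c0 c1 X unfolding c_def by simp
    have cX0: "0 \<le> c * \<bar>X\<bar>" using c0 unfolding c_def by simp
    have er: "\<eta> * (1 - rho y) \<le> 1 - rho y"
      using mult_left_le_one_le[of "1 - rho y" \<eta>] e1 assms(1) r1 by (simp add: mult.commute)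
    have er0: "0 \<le> \<eta> * (1 - rho y)" using assms(1) r1 by simp
    have mX: "c * max 0 X \<le> c * \<bar>X\<bar>" "c * max 0 (-X) \<le> c * \<bar>X\<bar>"
      using c0 assms(1) unfolding c_def by (auto intro!: mult_left_mono)
    have mX0: "0 \<le> c * max 0 X" "0 \<le> c * max 0 (-X)"
      using c0 assms(1) unfolding c_def by auto
    show ?thesis using b mX mX0 cX cX0 er er0
      unfolding pBB_def X_def[symmetric] c_def[symmetric] by auto
  qed
  have P4: "\<forall>y b. norm y = 1 \<and> b \<in> {Some 1, Some (-1), None} \<longrightarrow>
        pBB \<eta> y b \<in> borel_measurable MM \<and> (\<forall>l\<in>space MM. 0 \<le> pBB \<eta> y b l \<and> pBB \<eta> y b l \<le> 1)"
    using bnd by (auto intro!: meas_MM pBB_meas)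
  have P5: "\<forall>y. norm y = 1 \<longrightarrow>
        (\<forall>l\<in>space MM. pBB \<eta> y (Some 1) l + pBB \<eta> y (Some (-1)) l + pBB \<eta> y None l = 1)"
    by (auto simp: pBB_def max_def abs_if algebra_simps)
  have P6: "\<forall>\<phi> y a b. 0 \<le> \<phi> \<and> \<phi> < 2 * pi \<and> norm y = 1 \<and> a \<in> {1, -1} \<and>
        b \<in> {Some 1, Some (-1), None} \<longrightarrow>
        phi_plus_expect (alice_eff a \<phi>) (bob_eff \<eta> b y)
          = complex_of_real (integral\<^sup>L MM (\<lambda>l. pAA \<phi> a l * pBB \<eta> y b l))"
  proof (intro allI impI)
    fix \<phi> :: real and y :: "real^3" and a :: int and b :: "int option"
    assume h: "0 \<le> \<phi> \<and> \<phi> < 2 * pi \<and> norm y = 1 \<and> a \<in> {1, -1} \<and> b \<in> {Some 1, Some (-1), None}"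
    then have "b = None \<or> (\<exists>s. b = Some s \<and> s \<in> {1, -1})" by auto
    then show "phi_plus_expect (alice_eff a \<phi>) (bob_eff \<eta> b y)
          = complex_of_real (integral\<^sup>L MM (\<lambda>l. pAA \<phi> a l * pBB \<eta> y b l))"
    proof
      assume "b = None"
      then show ?thesis by (simp add: q_none int_none)
    next
      assume "\<exists>s. b = Some s \<and> s \<in> {1, -1}"
      then obtain s where "b = Some s" "s \<in> {1, -1}" by blast
      then show ?thesis by (simp add: q_some int_some)
    qed
  qed
  show ?thesis
    apply (rule exI[of _ MM], rule exI[of _ pAA], rule exI[of _ "pBB \<eta>"])
    using MM_prob P2 P3 P4 P5 P6 by blast
qed

end
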